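(* Let $R>0$. Every $\alpha\in(0,\frac{1}{8R}]$ satisfies $1-3\alpha R-\alpha^2R^2-\alpha^3R^3\ge 0$ and $1-8\alpha R+\alpha^2R^2-2\alpha^3R^3\ge 0$. Moreover, let $\mathbf L\colon\mathbb R^n\times\mathbb R^m\to\mathbb R$ be an $R$-smooth convex-concave function with a saddle point $\mathbf z^\star$, let $\mathbf z^0\in\mathbb R^n\times\mathbb R^m$, and let $\alpha=\frac{1}{8R}$ in the EAG-C iteration $$\mathbf z^{k+1/2}=\mathbf z^k+\tfrac{1}{k+2}(\mathbf z^0-\mathbf z^k)-\alpha\,\mathbf G(\mathbf z^k),\qquad \mathbf z^{k+1}=\mathbf z^k+\tfrac{1}{k+2}(\mathbf z^0-\mathbf z^k)-\alpha\,\mathbf G(\mathbf z^{k+1/2}),\quad k\ge0.$$ Then for all $k\ge 0$, $$\|\nabla\mathbf L(\mathbf z^k)\|^2\le\frac{260R^2\|\mathbf z^0-\mathbf z^\star\|^2}{(k+1)^2}.$$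
   Context: Write $\mathbf z=(\mathbf x,\mathbf y)$. $\mathbf L$ convex-concave: convex in $\mathbf x$ for fixed $\mathbf y$, concave in $\mathbf y$ for fixed $\mathbf x$. A saddle point $(\mathbf x^\star,\mathbf y^\star)$ satisfies $\mathbf L(\mathbf x^\star,\mathbf y)\le\mathbf L(\mathbf x^\star,\mathbf y^\star)\le\mathbf L(\mathbf x,\mathbf y^\star)$ for all $\mathbf x,\mathbf y$. $\mathbf G(\mathbf z)=(\nabla_{\mathbf x}\mathbf L(\mathbf x,\mathbf y),-\nabla_{\mathbf y}\mathbf L(\mathbf x,\mathbf y))$; $\mathbf L$ is $R$-smooth if it is differentiable and $\mathbf G$ is $R$-Lipschitz. *)

theory Defs
  imports "HOL-Analysis.Analysis"
begin

definition grad :: "('a::real_inner \<Rightarrow> real) \<Rightarrow> 'a \<Rightarrow> 'a" where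
  "grad f z = (SOME g. (f has_derivative (\<lambda>h. g \<bullet> h)) (at z))"

definition convex_concave :: "('a::real_vector \<Rightarrow> 'b::real_vector \<Rightarrow> real) \<Rightarrow> bool" where
  "convex_concave L \<longleftrightarrow> (\<forall>y. convex_on UNIV (\<lambda>x. L x y)) \<and> (\<forall>x. concave_on UNIV (\<lambda>y. L x y))"

definition saddle_point :: "('a \<Rightarrow> 'b \<Rightarrow> real) \<Rightarrow> 'a \<times> 'b \<Rightarrow> bool" where
  "saddle_point L zs \<longleftrightarrow>
     (\<forall>x y. L (fst zs) y \<le> L (fst zs) (snd zs) \<and> L (fst zs) (snd zs) \<le> L x (snd zs))"

definition joint :: "('a \<Rightarrow> 'b \<Rightarrow> real) \<Rightarrow> 'a \<times> 'b \<Rightarrow> real" where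
  "joint L z = L (fst z) (snd z)"

definition saddle_op :: "('a::real_inner \<Rightarrow> 'b::real_inner \<Rightarrow> real) \<Rightarrow> 'a \<times> 'b \<Rightarrow> 'a \<times> 'b" where
  "saddle_op L z = (grad (\<lambda>x. L x (snd z)) (fst z), - grad (\<lambda>y. L (fst z) y) (snd z))"

definition R_smooth :: "real \<Rightarrow> ('a::real_inner \<Rightarrow> 'b::real_inner \<Rightarrow> real) \<Rightarrow> bool" where
  "R_smooth R L \<longleftrightarrow> (\<forall>z. joint L differentiable (at z)) \<and>
     (\<forall>z w. norm (saddle_op L z - saddle_op L w) \<le> R * norm (z - w))"

end

theory Submission
  imports Defs
begin


lemma grad_unique:
  fixes f :: "'a::real_inner \<Rightarrow> real"
  assumes "(f has_derivative (\<lambda>h. g \<bullet> h)) (at x)"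
  shows "grad f x = g"
proof -
  have ex: "\<exists>g. (f has_derivative (\<lambda>h. g \<bullet> h)) (at x)" using assms by blast
  have "(f has_derivative (\<lambda>h. grad f x \<bullet> h)) (at x)" unfolding grad_def by (rule someI_ex[OF ex])
  then have "(\<lambda>h. grad f x \<bullet> h) = (\<lambda>h. g \<bullet> h)" using assms by (rule has_derivative_unique)
  then have "grad f x \<bullet> (grad f x - g) = g \<bullet> (grad f x - g)" by metis
  then have "(grad f x - g) \<bullet> (grad f x - g) = 0" by (simp add: inner_diff_left)
  thus ?thesis by simp
qed

lemma grad_works:
  fixes f :: "'a::euclidean_space \<Rightarrow> real"
  assumes "f differentiable (at x)"
  shows "(f has_derivative (\<lambda>h. grad f x \<bullet> h)) (at x)"
proof -
  obtain D where D: "(f has_derivative D) (at x)" using assms differentiable_def by blast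
  have lin: "linear D" using D has_derivative_linear by blast
  have "D = (\<lambda>h. adjoint D 1 \<bullet> h)"
  proof
    fix h
    have "h \<bullet> adjoint D 1 = D h \<bullet> 1" by (rule adjoint_works[OF lin])
    thus "D h = adjoint D 1 \<bullet> h" by (simp add: inner_commute)
  qed
  then have "(f has_derivative (\<lambda>h. adjoint D 1 \<bullet> h)) (at x)" using D by simp
  then show ?thesis using grad_unique by metis
qed

lemma convex_tangent:
  fixes f :: "'a::real_inner \<Rightarrow> real"
  assumes cv: "convex_on UNIV f" and d: "(f has_derivative (\<lambda>h. g \<bullet> h)) (at x)"
  shows "f y \<ge> f x + g \<bullet> (y - x)"
proof -
  define \<phi> where "\<phi> t = f (x + t *\<^sub>R (y - x))" for t :: real
  have cphi: "convex_on UNIV \<phi>"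
  proof (rule convex_onI)
    fix t1 t2 u :: real assume "0 < u" "u < 1"
    have "(1 - u) *\<^sub>R t1 + u *\<^sub>R t2 = (1-u)*t1 + u*t2" by simp
    have e: "x + ((1 - u) * t1 + u * t2) *\<^sub>R (y - x) = (1-u) *\<^sub>R (x + t1 *\<^sub>R (y - x)) + u *\<^sub>R (x + t2 *\<^sub>R (y - x))"
      by (simp add: algebra_simps)
    have "f ((1-u) *\<^sub>R (x + t1 *\<^sub>R (y - x)) + u *\<^sub>R (x + t2 *\<^sub>R (y - x))) \<le> (1-u) * f (x + t1 *\<^sub>R (y - x)) + u * f (x + t2 *\<^sub>R (y - x))"
      using cv \<open>0 < u\<close> \<open>u < 1\<close> by (intro convex_onD) auto
    thus "\<phi> ((1 - u) *\<^sub>R t1 + u *\<^sub>R t2) \<le> (1 - u) * \<phi> t1 + u * \<phi> t2"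
      unfolding \<phi>_def using e by simp
  qed auto
  have d1: "((\<lambda>t. x + t *\<^sub>R (y - x)) has_derivative (\<lambda>t. t *\<^sub>R (y - x))) (at 0)"
    by (auto intro!: derivative_eq_intros)
  have d2: "(f has_derivative (\<lambda>h. g \<bullet> h)) (at ((\<lambda>t. x + t *\<^sub>R (y - x)) 0))" using d by simp
  have "((f \<circ> (\<lambda>t. x + t *\<^sub>R (y - x))) has_derivative ((\<lambda>h. g \<bullet> h) \<circ> (\<lambda>t. t *\<^sub>R (y - x)))) (at 0)"
    by (rule diff_chain_at[OF d1 d2])
  moreover have "(f \<circ> (\<lambda>t. x + t *\<^sub>R (y - x))) = \<phi>" unfolding \<phi>_def by auto
  moreover have "((\<lambda>h. g \<bullet> h) \<circ> (\<lambda>t. t *\<^sub>R (y - x))) = (\<lambda>t. t * (g \<bullet> (y - x)))" by auto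
  ultimately have "(\<phi> has_derivative (\<lambda>t. t * (g \<bullet> (y - x)))) (at 0)"
    by simp
  moreover have "(\<lambda>t. t * (g \<bullet> (y - x))) = (*) (g \<bullet> (y - x))" by (rule ext) simp
  ultimately have "(\<phi> has_field_derivative (g \<bullet> (y - x))) (at 0)"
    by (simp add: has_field_derivative_def)
  hence "\<phi> 1 - \<phi> 0 \<ge> (g \<bullet> (y - x)) * (1 - 0)"
    by (intro convex_on_imp_above_tangent[OF cphi]) auto
  thus ?thesis unfolding \<phi>_def by simp
qed

lemma partials:
  fixes L :: "'a::euclidean_space \<Rightarrow> 'b::euclidean_space \<Rightarrow> real"
  assumes "joint L differentiable (at (x,y))"
  shows "((\<lambda>x'. L x' y) has_derivative (\<lambda>h. fst (grad (joint L) (x,y)) \<bullet> h)) (at x)"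
    and "((\<lambda>y'. L x y') has_derivative (\<lambda>h. snd (grad (joint L) (x,y)) \<bullet> h)) (at y)"
proof -
  let ?g = "grad (joint L) (x,y)"
  have J: "(joint L has_derivative (\<lambda>h. ?g \<bullet> h)) (at (x,y))" by (rule grad_works[OF assms])
  have d1: "((\<lambda>x'. (x', y)) has_derivative (\<lambda>h. (h, 0))) (at x)"
    by (rule has_derivative_Pair[OF has_derivative_ident has_derivative_const])
  have J1: "(joint L has_derivative (\<lambda>h. ?g \<bullet> h)) (at ((\<lambda>x'. (x', y)) x))" using J by simp
  have "((joint L \<circ> (\<lambda>x'. (x', y))) has_derivative ((\<lambda>h. ?g \<bullet> h) \<circ> (\<lambda>h. (h, 0)))) (at x)"
    by (rule diff_chain_at[OF d1 J1])
  moreover have "joint L \<circ> (\<lambda>x'. (x', y)) = (\<lambda>x'. L x' y)" by (auto simp: joint_def)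
  moreover have "((\<lambda>h. ?g \<bullet> h) \<circ> (\<lambda>h. (h, 0))) = (\<lambda>h. fst ?g \<bullet> h)"
    by (cases ?g) (auto simp: fun_eq_iff)
  ultimately show "((\<lambda>x'. L x' y) has_derivative (\<lambda>h. fst ?g \<bullet> h)) (at x)" by simp
  have d2: "((\<lambda>y'. (x, y')) has_derivative (\<lambda>h. (0, h))) (at y)"
    by (rule has_derivative_Pair[OF has_derivative_const has_derivative_ident])
  have J2: "(joint L has_derivative (\<lambda>h. ?g \<bullet> h)) (at ((\<lambda>y'. (x, y')) y))" using J by simp
  have "((joint L \<circ> (\<lambda>y'. (x, y'))) has_derivative ((\<lambda>h. ?g \<bullet> h) \<circ> (\<lambda>h. (0, h)))) (at y)"
    by (rule diff_chain_at[OF d2 J2])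
  moreover have "joint L \<circ> (\<lambda>y'. (x, y')) = (\<lambda>y'. L x y')" by (auto simp: joint_def)
  moreover have "((\<lambda>h. ?g \<bullet> h) \<circ> (\<lambda>h. (0, h))) = (\<lambda>h. snd ?g \<bullet> h)"
    by (cases ?g) (auto simp: fun_eq_iff)
  ultimately show "((\<lambda>y'. L x y') has_derivative (\<lambda>h. snd ?g \<bullet> h)) (at y)" by simp
qed

lemma saddle_op_eq:
  fixes L :: "'a::euclidean_space \<Rightarrow> 'b::euclidean_space \<Rightarrow> real"
  assumes "joint L differentiable (at z)"
  shows "saddle_op L z = (fst (grad (joint L) z), - snd (grad (joint L) z))"
proof -
  obtain x y where z: "z = (x,y)" by (cases z)
  have a: "joint L differentiable (at (x,y))" using assms z by simp
  show ?thesis unfolding saddle_op_def z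
    using grad_unique[OF partials(1)[OF a]] grad_unique[OF partials(2)[OF a]] by simp
qed

lemma norm_saddle_op:
  fixes L :: "'a::euclidean_space \<Rightarrow> 'b::euclidean_space \<Rightarrow> real"
  assumes "joint L differentiable (at z)"
  shows "norm (grad (joint L) z) = norm (saddle_op L z)"
  using saddle_op_eq[OF assms] by (cases "grad (joint L) z") (simp add: norm_Pair)

lemma x_tangent:
  fixes L :: "'a::euclidean_space \<Rightarrow> 'b::euclidean_space \<Rightarrow> real"
  assumes "R_smooth R L" "convex_concave L"
  shows "L x' y \<ge> L x y + fst (saddle_op L (x,y)) \<bullet> (x' - x)"
proof -
  have a: "joint L differentiable (at (x,y))" using assms(1) unfolding R_smooth_def by blast
  have cv: "convex_on UNIV (\<lambda>x. L x y)" using assms(2) unfolding convex_concave_def by blast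
  show ?thesis using convex_tangent[OF cv partials(1)[OF a]] saddle_op_eq[OF a] by simp
qed

lemma y_tangent:
  fixes L :: "'a::euclidean_space \<Rightarrow> 'b::euclidean_space \<Rightarrow> real"
  assumes "R_smooth R L" "convex_concave L"
  shows "L x y' \<le> L x y - snd (saddle_op L (x,y)) \<bullet> (y' - y)"
proof -
  have a: "joint L differentiable (at (x,y))" using assms(1) unfolding R_smooth_def by blast
  have cv: "convex_on UNIV (\<lambda>y. - L x y)" using assms(2) unfolding convex_concave_def concave_on_def by blast
  have d: "((\<lambda>y'. - L x y') has_derivative (\<lambda>h. (- snd (grad (joint L) (x,y))) \<bullet> h)) (at y)"
    using has_derivative_minus[OF partials(2)[OF a]] by simp
  have t: "- L x y' \<ge> - L x y + (- snd (grad (joint L) (x,y))) \<bullet> (y' - y)" by (rule convex_tangent[OF cv d])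
  have "snd (saddle_op L (x,y)) = - snd (grad (joint L) (x,y))" using saddle_op_eq[OF a] by simp
  then show ?thesis using t unfolding inner_minus_left by simp
qed

lemma monotone_G:
  fixes L :: "'a::euclidean_space \<Rightarrow> 'b::euclidean_space \<Rightarrow> real"
  assumes "R_smooth R L" "convex_concave L"
  shows "(saddle_op L z - saddle_op L w) \<bullet> (z - w) \<ge> 0"
proof -
  obtain x y where z: "z = (x,y)" by (cases z)
  obtain x' y' where w: "w = (x',y')" by (cases w)
  note t = x_tangent[OF assms] y_tangent[OF assms]
  have 1: "L x' y \<ge> L x y + fst (saddle_op L (x,y)) \<bullet> (x' - x)" by (rule t(1))
  have 2: "L x y' \<ge> L x' y' + fst (saddle_op L (x',y')) \<bullet> (x - x')" by (rule t(1))
  have 3: "L x y' \<le> L x y - snd (saddle_op L (x,y)) \<bullet> (y' - y)" by (rule t(2))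
  have 4: "L x' y \<le> L x' y' - snd (saddle_op L (x',y')) \<bullet> (y - y')" by (rule t(2))
  obtain a b where ab: "saddle_op L (x,y) = (a,b)" by (cases "saddle_op L (x,y)")
  obtain c d where cd: "saddle_op L (x',y') = (c,d)" by (cases "saddle_op L (x',y')")
  have e0: "(a - c) \<bullet> (x - x') + (b - d) \<bullet> (y - y') =
     - (a \<bullet> (x' - x)) - c \<bullet> (x - x') - b \<bullet> (y' - y) - d \<bullet> (y - y')"
    by (simp add: inner_diff_left inner_diff_right)
  have e: "(saddle_op L z - saddle_op L w) \<bullet> (z - w) =
     - (fst (saddle_op L (x,y)) \<bullet> (x' - x)) - fst (saddle_op L (x',y')) \<bullet> (x - x')
     - snd (saddle_op L (x,y)) \<bullet> (y' - y) - snd (saddle_op L (x',y')) \<bullet> (y - y')"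
    unfolding z w ab cd using e0 by simp
  show ?thesis using 1 2 3 4 e by linarith
qed

lemma saddle_zero:
  fixes L :: "'a::euclidean_space \<Rightarrow> 'b::euclidean_space \<Rightarrow> real"
  assumes "R_smooth R L" "saddle_point L zs"
  shows "saddle_op L zs = 0"
proof -
  obtain x y where z: "zs = (x,y)" by (cases zs)
  have a: "joint L differentiable (at (x,y))" using assms(1) unfolding R_smooth_def by blast
  have mn: "\<forall>x'\<in>UNIV. L x y \<le> L x' y" and mx: "\<forall>y'\<in>UNIV. L x y' \<le> L x y"
    using assms(2) unfolding saddle_point_def z by auto
  have "(\<lambda>h. fst (grad (joint L) (x,y)) \<bullet> h) = (\<lambda>v. 0)"
    using differential_zero_maxmin[OF _ open_UNIV partials(1)[OF a]] mn by blast
  hence g1: "fst (grad (joint L) (x,y)) = 0" by (metis inner_eq_zero_iff)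
  have "(\<lambda>h. snd (grad (joint L) (x,y)) \<bullet> h) = (\<lambda>v. 0)"
    using differential_zero_maxmin[OF _ open_UNIV partials(2)[OF a]] mx by blast
  hence g2: "snd (grad (joint L) (x,y)) = 0" by (metis inner_eq_zero_iff)
  show ?thesis using saddle_op_eq[OF a] g1 g2 z by (simp add: zero_prod_def)
qed



lemma step_scalar:
  fixes n \<alpha> vp vq vs vx vy gu pu :: real
  assumes n: "n \<ge> 2" and al: "\<alpha> > 0"
    and mono: "gu - pu - n * \<alpha> * vy + n * \<alpha> * vx \<ge> 0"
    and lip: "vs - 2 * vy + vq \<le> (1/64) * (vp - 2 * vx + vq)"
    and Q: "0 \<le> (15/32 * n^2 - 3/4 * n + 1/2) * vp + (63/32 * n^2) * vq + (3/2 * n^2 - n/4 - 1/4) * vs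
               + (-(15/16) * n^2 + n) * vx + (-3 * n^2) * vy"
  shows "\<alpha> * (n * (n+1)/2 - (n-1)/4) * vs + ((n-1) * pu - n * \<alpha> * vy) \<le> \<alpha> * ((n-1) * n/2 - (n-2)/4) * vp + (n-1) * gu"
proof -
  have h1: "(n-1) * (gu - pu - n * \<alpha> * vy + n * \<alpha> * vx) \<ge> 0" using n mono by simp
  have h2: "(2 * n^2 * \<alpha>) * ((1/64) * (vp - 2 * vx + vq) - (vs - 2 * vy + vq)) \<ge> 0" using al lip by simp
  have h3: "\<alpha> * ((15/32 * n^2 - 3/4 * n + 1/2) * vp + (63/32 * n^2) * vq + (3/2 * n^2 - n/4 - 1/4) * vs
               + (-(15/16) * n^2 + n) * vx + (-3 * n^2) * vy) \<ge> 0" using al Q by simp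
  have e: "\<alpha> * ((n-1) * n/2 - (n-2)/4) * vp + (n-1) * gu - (\<alpha> * (n * (n+1)/2 - (n-1)/4) * vs + ((n-1) * pu - n * \<alpha> * vy))
     = (n-1) * (gu - pu - n * \<alpha> * vy + n * \<alpha> * vx) + (2 * n^2 * \<alpha>) * ((1/64) * (vp - 2 * vx + vq) - (vs - 2 * vy + vq))
       + \<alpha> * ((15/32 * n^2 - 3/4 * n + 1/2) * vp + (63/32 * n^2) * vq + (3/2 * n^2 - n/4 - 1/4) * vs
               + (-(15/16) * n^2 + n) * vx + (-3 * n^2) * vy)"
    by (simp add: algebra_simps power2_eq_square divide_simps) 
  show ?thesis using h1 h2 h3 e by linarith
qed

lemma Q_nonneg:
  fixes G Gh Gp :: "'a::real_inner" and n :: real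
  assumes n: "n \<ge> 2"
  shows "0 \<le> (15/32 * n^2 - 3/4 * n + 1/2) * (G\<bullet>G) + (63/32 * n^2) * (Gh\<bullet>Gh) + (3/2 * n^2 - n/4 - 1/4) * (Gp\<bullet>Gp)
               + (-(15/16) * n^2 + n) * (G\<bullet>Gh) + (-3 * n^2) * (Gh\<bullet>Gp)"
proof -
  define m00 where "m00 = 15/32 * n^2 - 3/4 * n + 1/2"
  define m11 where "m11 = 63/32 * n^2"
  define m22 where "m22 = 3/2 * n^2 - n/4 - 1/4"
  define m01 where "m01 = (-(15/16) * n^2 + n)/2"
  define m12 where "m12 = -3/2 * n^2"
  define d where "d = n^2 * (216 * n^2 + 280 * n - 752)/4096"
  have nn: "n * n \<ge> 2 * n" using n by (simp add: mult_right_mono)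
  have m00p: "m00 > 0" unfolding m00_def power2_eq_square using nn n by linarith
  have m22p: "m22 > 0" unfolding m22_def power2_eq_square using nn n by linarith
  have dp0: "216 * (n * n) + 280 * n - 752 \<ge> 0" using nn n by linarith
  have dp: "d \<ge> 0" unfolding d_def power2_eq_square using dp0 by simp
  have N1: "0 \<le> m22 * m22 * (Gp\<bullet>Gp) + 2 * m22 * m12 * (Gh\<bullet>Gp) + m12 * m12 * (Gh\<bullet>Gh)"
  proof -
    have "0 \<le> (m22  *\<^sub>R Gp + m12  *\<^sub>R Gh) \<bullet> (m22  *\<^sub>R Gp + m12  *\<^sub>R Gh)" by simp
    also have "\<dots> = m22 * m22 * (Gp\<bullet>Gp) + 2 * m22 * m12 * (Gh\<bullet>Gp) + m12 * m12 * (Gh\<bullet>Gh)"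
      by (simp add: inner_add_left inner_add_right inner_commute algebra_simps)
    finally show ?thesis .
  qed
  have N2: "0 \<le> m00 * m00 * (G\<bullet>G) + 2 * m00 * m01 * (G\<bullet>Gh) + m01 * m01 * (Gh\<bullet>Gh)"
  proof -
    have "0 \<le> (m00  *\<^sub>R G + m01  *\<^sub>R Gh) \<bullet> (m00  *\<^sub>R G + m01  *\<^sub>R Gh)" by simp
    also have "\<dots> = m00 * m00 * (G\<bullet>G) + 2 * m00 * m01 * (G\<bullet>Gh) + m01 * m01 * (Gh\<bullet>Gh)"
      by (simp add: inner_add_left inner_add_right inner_commute algebra_simps)
    finally show ?thesis .
  qed
  define Q where "Q = (15/32 * n^2 - 3/4 * n + 1/2) * (G\<bullet>G) + (63/32 * n^2) * (Gh\<bullet>Gh) + (3/2 * n^2 - n/4 - 1/4) * (Gp\<bullet>Gp)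
               + (-(15/16) * n^2 + n) * (G\<bullet>Gh) + (-3 * n^2) * (Gh\<bullet>Gp)"
  have e: "m00 * m22 * Q = m00 * (m22 * m22 * (Gp\<bullet>Gp) + 2 * m22 * m12 * (Gh\<bullet>Gp) + m12 * m12 * (Gh\<bullet>Gh))
      + m22 * (m00 * m00 * (G\<bullet>G) + 2 * m00 * m01 * (G\<bullet>Gh) + m01 * m01 * (Gh\<bullet>Gh)) + d * (Gh\<bullet>Gh)"
    unfolding Q_def m00_def m11_def m22_def m01_def m12_def d_def
    by (simp add: algebra_simps power2_eq_square divide_simps)
  have "0 \<le> m00 * m22 * Q" unfolding e using N1 N2 dp m00p m22p by simp
  hence "0 \<le> Q" using mult_pos_pos[OF m00p m22p] by (auto simp: zero_le_mult_iff)
  thus ?thesis unfolding Q_def .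
qed

lemma step_vec:
  fixes G Gh Gp u :: "'a::real_inner" and n \<alpha> :: real
  assumes n: "n \<ge> 2" and al: "\<alpha> > 0"
    and mono: "(Gp - G) \<bullet> (- ((1/n) *\<^sub>R u) - \<alpha> *\<^sub>R Gh) \<ge> 0"
    and lip: "norm (Gp - Gh) \<le> (1/8) * norm (G - Gh)"
  shows "\<alpha> * (n * (n+1)/2 - (n-1)/4) * (norm Gp)^2 + n * (Gp \<bullet> (((n-1)/n) *\<^sub>R u - \<alpha> *\<^sub>R Gh))
       \<le> \<alpha> * ((n-1) * n/2 - (n-2)/4) * (norm G)^2 + (n-1) * (G \<bullet> u)"
proof -
  have n0: "n \<noteq> 0" using n by simp
  have m1: "n * ((Gp - G) \<bullet> (- ((1/n) *\<^sub>R u) - \<alpha> *\<^sub>R Gh))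
      = G \<bullet> u - Gp \<bullet> u - n * \<alpha> * (Gh \<bullet> Gp) + n * \<alpha> * (G \<bullet> Gh)"
    using n0 by (simp add: inner_diff_left inner_diff_right inner_commute algebra_simps)
  have m2: "G \<bullet> u - Gp \<bullet> u - n * \<alpha> * (Gh \<bullet> Gp) + n * \<alpha> * (G \<bullet> Gh) \<ge> 0"
    unfolding m1[symmetric] using mono n by simp
  have l1: "(norm (Gp - Gh))^2 \<le> ((1/8) * norm (G - Gh))^2"
    using lip by (intro power_mono) auto
  have l2: "Gp \<bullet> Gp - 2 * (Gh \<bullet> Gp) + Gh \<bullet> Gh \<le> (1/64) * (G \<bullet> G - 2 * (G \<bullet> Gh) + Gh \<bullet> Gh)"
    using l1 unfolding power_mult_distrib power2_norm_eq_inner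
    by (simp add: inner_diff_left inner_diff_right inner_commute algebra_simps power2_eq_square)
  have lhs: "n * (Gp \<bullet> (((n-1)/n) *\<^sub>R u - \<alpha> *\<^sub>R Gh)) = (n-1) * (Gp \<bullet> u) - n * \<alpha> * (Gh \<bullet> Gp)"
    using n0 by (simp add: inner_diff_right inner_commute field_simps)
  have s: "\<alpha> * (n * (n+1)/2 - (n-1)/4) * (Gp \<bullet> Gp) + ((n-1) * (Gp \<bullet> u) - n * \<alpha> * (Gh \<bullet> Gp))
     \<le> \<alpha> * ((n-1) * n/2 - (n-2)/4) * (G \<bullet> G) + (n-1) * (G \<bullet> u)"
    by (rule step_scalar[OF n al m2 l2 Q_nonneg[OF n]])
  show ?thesis using s unfolding lhs power2_norm_eq_inner .
qed



lemma final_scalar: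
  fixes R \<alpha> c g D a :: real
  assumes R: "R > 0" and al: "\<alpha> = 1 / (8 * R)" and c: "c > 0" and g: "g \<ge> 0" and D: "D \<ge> 0"
    and a: "a \<ge> c^2/2" and I: "\<alpha> * a * g^2 - c * g * D \<le> \<alpha> * (R * D)^2"
  shows "g^2 \<le> 260 * R^2 * D^2 / c^2"
proof -
  define X where "X = c * g"
  have alp: "\<alpha> > 0" using al R by simp
  have "\<alpha> * (c^2/2) * g^2 \<le> \<alpha> * a * g^2" using a alp g by (intro mult_right_mono mult_left_mono) auto
  hence I2: "\<alpha> * X^2 / 2 - X * D \<le> \<alpha> * R^2 * D^2" using I unfolding X_def
    by (simp add: power_mult_distrib algebra_simps)
  have "8 * R * (\<alpha> * X^2 / 2 - X * D) \<le> 8 * R * (\<alpha> * R^2 * D^2)"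
    using I2 R by (intro mult_left_mono) auto
  moreover have "8 * R * \<alpha> = 1" using al R by simp
  moreover have "8 * R * (\<alpha> * X^2 / 2 - X * D) = (8 * R * \<alpha>) * X^2 / 2 - 8 * R * X * D"
    by (simp add: algebra_simps)
  moreover have "8 * R * (\<alpha> * R^2 * D^2) = (8 * R * \<alpha>) * (R^2 * D^2)"
    by (simp add: algebra_simps)
  ultimately have I3: "X^2 / 2 - 8 * R * X * D \<le> R^2 * D^2"
    by simp
  have Y: "0 \<le> (X/2 - 8 * R * D)^2" by simp
  hence Y2: "8 * R * X * D \<le> X^2/4 + 64 * R^2 * D^2" by (simp add: power2_eq_square algebra_simps)
  have "X^2 \<le> 260 * R^2 * D^2" using I3 Y2 by linarith
  thus ?thesis unfolding X_def using c by (simp add: power_mult_distrib field_simps)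
qed



theorem corollary1:
  fixes R :: real
    and L :: "real^'n \<Rightarrow> real^'m \<Rightarrow> real"
    and zs :: "(real^'n) \<times> (real^'m)"
    and z zh :: "nat \<Rightarrow> (real^'n) \<times> (real^'m)"
    and \<alpha> :: real
  assumes R_pos: "R > 0"
  shows "(\<forall>a. 0 < a \<and> a \<le> 1 / (8 * R) \<longrightarrow>
            1 - 3*a*R - a^2*R^2 - a^3*R^3 \<ge> 0 \<and> 1 - 8*a*R + a^2*R^2 - 2*a^3*R^3 \<ge> 0)
       \<and> ((R_smooth R L \<and> convex_concave L \<and> saddle_point L zs \<and> \<alpha> = 1 / (8 * R)
           \<and> (\<forall>k. zh k = z k + (1 / (real k + 2)) *\<^sub>R (z 0 - z k) - \<alpha> *\<^sub>R saddle_op L (z k))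
           \<and> (\<forall>k. z (Suc k) = z k + (1 / (real k + 2)) *\<^sub>R (z 0 - z k) - \<alpha> *\<^sub>R saddle_op L (zh k)))
          \<longrightarrow> (\<forall>k. (norm (grad (joint L) (z k)))^2
                     \<le> 260 * R^2 * (norm (z 0 - zs))^2 / (real k + 1)^2))"
proof
  show "\<forall>a. 0 < a \<and> a \<le> 1 / (8 * R) \<longrightarrow>
            1 - 3*a*R - a^2*R^2 - a^3*R^3 \<ge> 0 \<and> 1 - 8*a*R + a^2*R^2 - 2*a^3*R^3 \<ge> 0"
  proof (intro allI impI)
    fix a :: real assume a: "0 < a \<and> a \<le> 1 / (8 * R)"
    define t where "t = a * R"
    have t0: "t > 0" using a R_pos unfolding t_def by simp
    have t1: "t \<le> 1/8" using a R_pos unfolding t_def by (simp add: field_simps)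
    have e: "3*a*R = 3*t" "a^2*R^2 = t^2" "a^3*R^3 = t^3" "8*a*R = 8*t" "2*a^3*R^3 = 2*t^3"
      unfolding t_def by (simp_all add: power_mult_distrib)
    have t2: "t^2 \<le> t/8" using t0 t1 by (simp add: power2_eq_square mult_left_mono)
    have t3: "t^3 \<le> t^2/8" using t0 t1 by (simp add: power3_eq_cube power2_eq_square mult_left_mono)
    have t4: "t^2 \<ge> 0" by simp
    show "1 - 3*a*R - a^2*R^2 - a^3*R^3 \<ge> 0 \<and> 1 - 8*a*R + a^2*R^2 - 2*a^3*R^3 \<ge> 0"
      unfolding e using t0 t1 t2 t3 t4 by linarith
  qed
next
  show "(R_smooth R L \<and> convex_concave L \<and> saddle_point L zs \<and> \<alpha> = 1 / (8 * R)
           \<and> (\<forall>k. zh k = z k + (1 / (real k + 2)) *\<^sub>R (z 0 - z k) - \<alpha> *\<^sub>R saddle_op L (z k))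
           \<and> (\<forall>k. z (Suc k) = z k + (1 / (real k + 2)) *\<^sub>R (z 0 - z k) - \<alpha> *\<^sub>R saddle_op L (zh k)))
          \<longrightarrow> (\<forall>k. (norm (grad (joint L) (z k)))^2
                     \<le> 260 * R^2 * (norm (z 0 - zs))^2 / (real k + 1)^2)"
  proof (intro impI allI)
    fix k :: nat
    assume H: "R_smooth R L \<and> convex_concave L \<and> saddle_point L zs \<and> \<alpha> = 1 / (8 * R)
           \<and> (\<forall>k. zh k = z k + (1 / (real k + 2)) *\<^sub>R (z 0 - z k) - \<alpha> *\<^sub>R saddle_op L (z k))
           \<and> (\<forall>k. z (Suc k) = z k + (1 / (real k + 2)) *\<^sub>R (z 0 - z k) - \<alpha> *\<^sub>R saddle_op L (zh k))"
    have sm: "R_smooth R L" and cc: "convex_concave L" and sp: "saddle_point L zs"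
      and al: "\<alpha> = 1 / (8 * R)" using H by auto
    have zh: "\<And>j. zh j = z j + (1 / (real j + 2)) *\<^sub>R (z 0 - z j) - \<alpha> *\<^sub>R saddle_op L (z j)"
      using H by blast
    have zs1: "\<And>j. z (Suc j) = z j + (1 / (real j + 2)) *\<^sub>R (z 0 - z j) - \<alpha> *\<^sub>R saddle_op L (zh j)"
      using H by blast
    have alp: "\<alpha> > 0" using al R_pos by simp
    have aR: "R * \<alpha> = 1/8" using al R_pos by simp
    have lipG: "\<And>p q. norm (saddle_op L p - saddle_op L q) \<le> R * norm (p - q)"
      using sm unfolding R_smooth_def by blast
    have G0: "saddle_op L zs = 0" by (rule saddle_zero[OF sm sp])
    define G where "G j = saddle_op L (z j)" for j
    define Gh where "Gh j = saddle_op L (zh j)" for j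
    define a where "a j = (real j + 1) * (real j + 2) / 2 - real j / 4" for j
    define V where "V j = \<alpha> * a j * (norm (G j))^2 + (real j + 1) * (G j \<bullet> (z j - z 0))" for j
    have step: "V (Suc j) \<le> V j" for j
    proof -
      define n where "n = real j + 2"
      define u where "u = z j - z 0"
      have n2: "n \<ge> 2" unfolding n_def by simp
      have n0: "n \<noteq> 0" using n2 by simp
      have d1: "z (Suc j) - z j = - ((1/n) *\<^sub>R u) - \<alpha> *\<^sub>R Gh j"
        unfolding n_def u_def Gh_def using zs1[of j] by (simp add: algebra_simps)
      have mono: "(G (Suc j) - G j) \<bullet> (- ((1/n) *\<^sub>R u) - \<alpha> *\<^sub>R Gh j) \<ge> 0"
        using monotone_G[OF sm cc, of "z (Suc j)" "z j"] unfolding d1 G_def .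
      define c where "c = (1 / (real j + 2)) *\<^sub>R (z 0 - z j)"
      have e1: "z (Suc j) = z j + c - \<alpha> *\<^sub>R Gh j" unfolding c_def Gh_def by (rule zs1)
      have e2: "zh j = z j + c - \<alpha> *\<^sub>R G j" unfolding c_def G_def by (rule zh)
      have d2: "z (Suc j) - zh j = \<alpha> *\<^sub>R (G j - Gh j)"
        unfolding e1 e2 by (simp add: algebra_simps scaleR_diff_right)
      have "norm (G (Suc j) - Gh j) \<le> R * norm (z (Suc j) - zh j)"
        unfolding G_def Gh_def by (rule lipG)
      also have "\<dots> = (R * \<alpha>) * norm (G j - Gh j)" unfolding d2 using alp by simp
      finally have lip: "norm (G (Suc j) - Gh j) \<le> (1/8) * norm (G j - Gh j)" unfolding aR .
      have sv: "\<alpha> * (n * (n+1)/2 - (n-1)/4) * (norm (G (Suc j)))^2 + n * (G (Suc j) \<bullet> (((n-1)/n) *\<^sub>R u - \<alpha> *\<^sub>R Gh j))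
       \<le> \<alpha> * ((n-1) * n/2 - (n-2)/4) * (norm (G j))^2 + (n-1) * (G j \<bullet> u)"
        by (rule step_vec[OF n2 alp mono lip])
      have d3: "z (Suc j) - z 0 = ((n-1)/n) *\<^sub>R u - \<alpha> *\<^sub>R Gh j"
      proof -
        have "z (Suc j) - z 0 = u + (z (Suc j) - z j)" unfolding u_def by simp
        also have "\<dots> = u - (1/n) *\<^sub>R u - \<alpha> *\<^sub>R Gh j" unfolding d1 by simp
        also have "u - (1/n) *\<^sub>R u = ((n-1)/n) *\<^sub>R u" using n0 by (simp add: diff_divide_distrib scaleR_diff_left)
        finally show ?thesis .
      qed
      have a1: "a (Suc j) = n * (n+1)/2 - (n-1)/4" unfolding a_def n_def by (simp add: algebra_simps)
      have a2: "a j = (n-1) * n/2 - (n-2)/4" unfolding a_def n_def by (simp add: algebra_simps)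
      have r1: "real (Suc j) + 1 = n" unfolding n_def by simp
      have r2: "real j + 1 = n - 1" unfolding n_def by simp
      show ?thesis unfolding V_def r1 r2 a1 a2 d3 using sv unfolding u_def .
    qed
    have Vk: "V k \<le> V 0"
    proof (induction k)
      case 0 show ?case by simp
    next
      case (Suc k) thus ?case using step[of k] by linarith
    qed
    define D where "D = norm (z 0 - zs)"
    have "norm (G 0) = norm (saddle_op L (z 0) - saddle_op L zs)" unfolding G_def G0 by simp
    also have "\<dots> \<le> R * D" unfolding D_def by (rule lipG)
    finally have nG0: "norm (G 0) \<le> R * D" .
    have V0: "V 0 \<le> \<alpha> * (R * D)^2"
    proof -
      have "V 0 = \<alpha> * (norm (G 0))^2" unfolding V_def a_def by simp
      also have "\<dots> \<le> \<alpha> * (R * D)^2" using nG0 alp by (intro mult_left_mono power_mono) auto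
      finally show ?thesis .
    qed
    have low: "G k \<bullet> (z k - z 0) \<ge> - (norm (G k) * D)"
    proof -
      have "G k \<bullet> (z k - z 0) = (G k - saddle_op L zs) \<bullet> (z k - zs) + G k \<bullet> (zs - z 0)"
        unfolding G0 by (simp add: inner_diff_right)
      moreover have "(G k - saddle_op L zs) \<bullet> (z k - zs) \<ge> 0" unfolding G_def by (rule monotone_G[OF sm cc])
      moreover have "- (G k \<bullet> (zs - z 0)) \<le> norm (G k) * D"
        using norm_cauchy_schwarz[of "G k" "z 0 - zs"] unfolding D_def
        by (simp add: inner_diff_right)
      ultimately show ?thesis by linarith
    qed
    have I: "\<alpha> * a k * (norm (G k))^2 - (real k + 1) * norm (G k) * D \<le> \<alpha> * (R * D)^2"
    proof -
      have "(real k + 1) * (G k \<bullet> (z k - z 0)) \<ge> (real k + 1) * (- (norm (G k) * D))"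
        using low by (intro mult_left_mono) auto
      thus ?thesis using Vk V0 unfolding V_def by (simp add: algebra_simps)
    qed
    have ak: "a k \<ge> (real k + 1)^2 / 2" unfolding a_def by (simp add: power2_eq_square field_simps)
    have fin: "(norm (G k))^2 \<le> 260 * R^2 * D^2 / (real k + 1)^2"
      by (rule final_scalar[OF R_pos al _ _ _ ak I]) (auto simp: D_def)
    have "joint L differentiable (at (z k))" using sm unfolding R_smooth_def by blast
    hence "norm (grad (joint L) (z k)) = norm (G k)" unfolding G_def by (rule norm_saddle_op)
    thus "(norm (grad (joint L) (z k)))^2 \<le> 260 * R^2 * (norm (z 0 - zs))^2 / (real k + 1)^2"
      using fin unfolding D_def by simp
  qed
qed

end
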